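(* Let $d,m,n$ be positive integers with $\min\{m,n\}\ge2$ and $d\le mn$, let $M_1,\dots,M_{q_0}$ be all the $2\times2$ minors of $m\times n$ matrices, and let $P_1,P_2:\mathbb{R}^d\to M^{m\times n}$ be linear isomorphisms onto their images with $P_1\sim P_2$. Let $K_j=P_j(\mathbb{R}^d)$, $j=1,2$. Then $K_1$ has no Rank-$1$ connections if and only if $K_2$ has no Rank-$1$ connections, and $\mathrm{Span}\{M_1(P_1(z)),\dots,M_{q_0}(P_1(z))\}=\mathrm{Span}\{M_1(P_2(z)),\dots,M_{q_0}(P_2(z))\}$ as subsets of the polynomial ring $\mathbb{R}[z_1,\dots,z_d]$.
   Context: A linear map $P:\mathbb{R}^d\to M^{m\times n}$ has the form $P(z)=(a_{ij}\cdot z)_{ij}$ with $a_{ij}\in\mathbb{R}^d$ and is viewed as an $m\times n$ matrix with entries in $\mathbb{R}[z_1,\dots,z_d]$. $P_1\sim P_2$ means $P_2(z)$ is obtained from $P_1(z)$, as such matrices, by finitely many elementary row and column operations. A set has Rank-$1$ connections if it contains $A\neq B$ with $\mathrm{Rank}(A-B)=1$. *)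

theory Defs
  imports "HOL-Analysis.Analysis" "HOL-Library.Function_Algebras"
begin

text \<open>A linear map P : R^d -> M^{m x n} is a function real^'d => real^'n^'m
  (row index 'm, column index 'n).  Viewed as an m x n matrix of (linear)
  polynomials in z, elementary row/column operations (with real scalars)
  act pointwise in z.\<close>

definition row_swap :: "'m \<Rightarrow> 'm \<Rightarrow> real^'n^'m \<Rightarrow> real^'n^'m" where
  "row_swap i j A = (\<chi> k. if k = i then A$j else if k = j then A$i else A$k)"

definition row_scale :: "'m \<Rightarrow> real \<Rightarrow> real^'n^'m \<Rightarrow> real^'n^'m" where
  "row_scale i c A = (\<chi> k. if k = i then c *\<^sub>R A$k else A$k)"

definition row_add :: "'m \<Rightarrow> 'm \<Rightarrow> real \<Rightarrow> real^'n^'m \<Rightarrow> real^'n^'m" where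
  "row_add i j c A = (\<chi> k. if k = i then A$i + c *\<^sub>R A$j else A$k)"

definition col_swap :: "'n \<Rightarrow> 'n \<Rightarrow> real^'n^'m \<Rightarrow> real^'n^'m" where
  "col_swap i j A = (\<chi> r l. if l = i then A$r$j else if l = j then A$r$i else A$r$l)"

definition col_scale :: "'n \<Rightarrow> real \<Rightarrow> real^'n^'m \<Rightarrow> real^'n^'m" where
  "col_scale i c A = (\<chi> r l. if l = i then c * A$r$l else A$r$l)"

definition col_add :: "'n \<Rightarrow> 'n \<Rightarrow> real \<Rightarrow> real^'n^'m \<Rightarrow> real^'n^'m" where
  "col_add i j c A = (\<chi> r l. if l = i then A$r$i + c * A$r$j else A$r$l)"

inductive elem_op :: "(real^'n^'m \<Rightarrow> real^'n^'m) \<Rightarrow> bool" where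
  "elem_op (row_swap i j)"
| "c \<noteq> 0 \<Longrightarrow> elem_op (row_scale i c)"
| "i \<noteq> j \<Longrightarrow> elem_op (row_add i j c)"
| "elem_op (col_swap i' j')"
| "c \<noteq> 0 \<Longrightarrow> elem_op (col_scale i' c)"
| "i' \<noteq> j' \<Longrightarrow> elem_op (col_add i' j' c)"

inductive mat_equiv :: "('d \<Rightarrow> real^'n^'m) \<Rightarrow> ('d \<Rightarrow> real^'n^'m) \<Rightarrow> bool" where
  refl: "mat_equiv P P"
| step: "mat_equiv P Q \<Longrightarrow> elem_op f \<Longrightarrow> mat_equiv P (\<lambda>z. f (Q z))"

definition rank1_connections :: "(real^'n^'m) set \<Rightarrow> bool" where
  "rank1_connections K \<longleftrightarrow> (\<exists>A\<in>K. \<exists>B\<in>K. A \<noteq> B \<and> rank (A - B) = 1)"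

definition minor2 :: "'m \<Rightarrow> 'm \<Rightarrow> 'n \<Rightarrow> 'n \<Rightarrow> real^'n^'m \<Rightarrow> real" where
  "minor2 i1 i2 j1 j2 A = A$i1$j1 * A$i2$j2 - A$i1$j2 * A$i2$j1"

text \<open>The polynomials M_k(P(z)), represented as (polynomial) functions of z.\<close>
definition minor_polys :: "('d \<Rightarrow> real^'n^'m) \<Rightarrow> ('d \<Rightarrow> real) set" where
  "minor_polys P = {(\<lambda>z. minor2 i1 i2 j1 j2 (P z)) | i1 i2 j1 j2. i1 \<noteq> i2 \<and> j1 \<noteq> j2}"

definition fspan :: "('d \<Rightarrow> real) set \<Rightarrow> ('d \<Rightarrow> real) set" where
  "fspan S = module.span (\<lambda>c f z. c * f z) S"

end

theory Submission
  imports Defs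
begin

interpretation fm: module "\<lambda>c (f::'d\<Rightarrow>real) z. c * f z"
  by unfold_locales (auto simp: fun_eq_iff algebra_simps)

lemma fspan_eq: "fspan S = fm.span S"
  by (simp add: fspan_def)

definition mp :: "'m \<Rightarrow> 'm \<Rightarrow> 'n \<Rightarrow> 'n \<Rightarrow> ('d \<Rightarrow> real^'n^'m) \<Rightarrow> ('d \<Rightarrow> real)" where
  "mp i1 i2 j1 j2 Q = (\<lambda>z. minor2 i1 i2 j1 j2 (Q z))"

lemma mp_in: "mp i1 i2 j1 j2 Q \<in> fm.span (minor_polys Q)"
proof (cases "i1 = i2 \<or> j1 = j2")
  case True
  then have "mp i1 i2 j1 j2 Q = 0"
    by (auto simp: mp_def minor2_def fun_eq_iff)
  then show ?thesis using fm.span_zero by simp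
next
  case False
  then have "mp i1 i2 j1 j2 Q \<in> minor_polys Q"
    by (auto simp: mp_def minor_polys_def)
  then show ?thesis using fm.span_superset by blast
qed

lemma span_scale': "x \<in> fm.span S \<Longrightarrow> (\<lambda>z. c * x z) \<in> fm.span S"
  using fm.span_scale by blast

lemma span_add': "x \<in> fm.span S \<Longrightarrow> y \<in> fm.span S \<Longrightarrow> (\<lambda>z. x z + y z) \<in> fm.span S"
proof -
  assume "x \<in> fm.span S" "y \<in> fm.span S"
  then have "x + y \<in> fm.span S" by (rule fm.span_add)
  then show ?thesis by (simp add: plus_fun_def)
qed

lemma minor_key:
  assumes "elem_op f"
  shows "mp i1 i2 j1 j2 (\<lambda>z. f (Q z)) \<in> fm.span (minor_polys Q)"
  using assms
proof (cases rule: elem_op.cases)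
  case (1 i j)
  define s where "s k = (if k = i then j else if k = j then i else k)" for k
  have "mp i1 i2 j1 j2 (\<lambda>z. f (Q z)) = mp (s i1) (s i2) j1 j2 Q" (is "_ = ?rhs")
    by (auto simp: 1 mp_def minor2_def row_swap_def s_def fun_eq_iff)
  moreover have "?rhs \<in> fm.span (minor_polys Q)" by (rule mp_in)
  ultimately show ?thesis by simp
next
  case (2 c i)
  define a where "a k = (if k = i then c else 1)" for k
  have "mp i1 i2 j1 j2 (\<lambda>z. f (Q z)) = (\<lambda>z. (a i1 * a i2) * mp i1 i2 j1 j2 Q z)" (is "_ = ?rhs")
    by (auto simp: 2 mp_def minor2_def row_scale_def a_def fun_eq_iff algebra_simps)
  moreover have "?rhs \<in> fm.span (minor_polys Q)" by (intro span_scale' mp_in)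
  ultimately show ?thesis by simp
next
  case (3 i j c)
  define a where "a k = (if k = i then c else 0)" for k
  have "mp i1 i2 j1 j2 (\<lambda>z. f (Q z)) = (\<lambda>z. (mp i1 i2 j1 j2 Q z + a i2 * mp i1 j j1 j2 Q z)
     + (a i1 * mp j i2 j1 j2 Q z + (a i1 * a i2) * mp j j j1 j2 Q z))" (is "_ = ?rhs")
    by (auto simp: 3 mp_def minor2_def row_add_def a_def fun_eq_iff algebra_simps)
  moreover have "?rhs \<in> fm.span (minor_polys Q)" by (intro span_add' span_scale' mp_in)
  ultimately show ?thesis by simp
next
  case (4 i j)
  define s where "s k = (if k = i then j else if k = j then i else k)" for k
  have "mp i1 i2 j1 j2 (\<lambda>z. f (Q z)) = mp i1 i2 (s j1) (s j2) Q" (is "_ = ?rhs")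
    by (auto simp: 4 mp_def minor2_def col_swap_def s_def fun_eq_iff)
  moreover have "?rhs \<in> fm.span (minor_polys Q)" by (rule mp_in)
  ultimately show ?thesis by simp
next
  case (5 c i)
  define a where "a k = (if k = i then c else 1)" for k
  have "mp i1 i2 j1 j2 (\<lambda>z. f (Q z)) = (\<lambda>z. (a j1 * a j2) * mp i1 i2 j1 j2 Q z)" (is "_ = ?rhs")
    by (auto simp: 5 mp_def minor2_def col_scale_def a_def fun_eq_iff algebra_simps)
  moreover have "?rhs \<in> fm.span (minor_polys Q)" by (intro span_scale' mp_in)
  ultimately show ?thesis by simp
next
  case (6 i j c)
  define a where "a k = (if k = i then c else 0)" for k
  have "mp i1 i2 j1 j2 (\<lambda>z. f (Q z)) = (\<lambda>z. (mp i1 i2 j1 j2 Q z + a j2 * mp i1 i2 j1 j Q z)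
     + (a j1 * mp i1 i2 j j2 Q z + (a j1 * a j2) * mp i1 i2 j j Q z))" (is "_ = ?rhs")
    by (auto simp: 6 mp_def minor2_def col_add_def a_def fun_eq_iff algebra_simps)
  moreover have "?rhs \<in> fm.span (minor_polys Q)" by (intro span_add' span_scale' mp_in)
  ultimately show ?thesis by simp
qed

lemma minor_span_sub:
  assumes "elem_op f"
  shows "fm.span (minor_polys (\<lambda>z. f (Q z))) \<subseteq> fm.span (minor_polys Q)"
proof (rule fm.span_minimal)
  show "minor_polys (\<lambda>z. f (Q z)) \<subseteq> fm.span (minor_polys Q)"
    using minor_key[OF assms] by (auto simp: minor_polys_def mp_def)
qed simp


lemma elem_inv:
  assumes "elem_op (f::real^'n^'m \<Rightarrow> real^'n^'m)"
  shows "\<exists>g. elem_op g \<and> (\<forall>A. g (f A) = A)"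
  using assms
proof (cases rule: elem_op.cases)
  case (1 i j)
  have "\<forall>A. row_swap i j (f A) = A" by (auto simp: 1 row_swap_def vec_eq_iff)
  then show ?thesis using elem_op.intros(1) by blast
next
  case (2 c i)
  have "\<forall>A. row_scale i (1/c) (f A) = A" using 2 by (auto simp: row_scale_def vec_eq_iff)
  moreover have "elem_op (row_scale i (1/c) :: real^'n^'m \<Rightarrow> real^'n^'m)" using 2 by (intro elem_op.intros) simp
  ultimately show ?thesis by blast
next
  case (3 i j c)
  have "\<forall>A. row_add i j (-c) (f A) = A" using 3 by (auto simp: row_add_def vec_eq_iff)
  moreover have "elem_op (row_add i j (-c) :: real^'n^'m \<Rightarrow> real^'n^'m)" using 3 by (intro elem_op.intros) simp
  ultimately show ?thesis by blast
next
  case (4 i j)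
  have "\<forall>A. col_swap i j (f A) = A" by (auto simp: 4 col_swap_def vec_eq_iff)
  then show ?thesis using elem_op.intros(4) by blast
next
  case (5 c i)
  have "\<forall>A. col_scale i (1/c) (f A) = A" using 5 by (auto simp: col_scale_def vec_eq_iff)
  moreover have "elem_op (col_scale i (1/c) :: real^'n^'m \<Rightarrow> real^'n^'m)" using 5 by (intro elem_op.intros) simp
  ultimately show ?thesis by blast
next
  case (6 i j c)
  have "\<forall>A. col_add i j (-c) (f A) = A" using 6 by (auto simp: col_add_def vec_eq_iff)
  moreover have "elem_op (col_add i j (-c) :: real^'n^'m \<Rightarrow> real^'n^'m)" using 6 by (intro elem_op.intros) simp
  ultimately show ?thesis by blast
qed

lemma elem_diff:
  assumes "elem_op (f::real^'n^'m \<Rightarrow> real^'n^'m)"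
  shows "f (A - B) = f A - f B"
  using assms
  by (cases rule: elem_op.cases)
     (auto simp: row_swap_def row_scale_def row_add_def col_swap_def col_scale_def col_add_def
        vec_eq_iff algebra_simps)

lemma rank_rows_le:
  fixes A B :: "real^'n^'m"
  assumes "\<And>k. row k B \<in> span (rows A)"
  shows "rank B \<le> rank A"
proof -
  have "rows B \<subseteq> span (rows A)" using assms by (auto simp: rows_def)
  then have "dim (rows B) \<le> dim (span (rows A))" by (rule dim_subset)
  then show ?thesis by (simp add: row_rank_def)
qed

lemma rank_cols_le:
  fixes A B :: "real^'n^'m"
  assumes "\<And>k. column k B \<in> span (columns A)"
  shows "rank B \<le> rank A"
proof -
  have "columns B \<subseteq> span (columns A)" using assms by (auto simp: columns_def)
  then have "dim (columns B) \<le> dim (span (columns A))" by (rule dim_subset)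
  then show ?thesis by (simp add: column_rank_def)
qed

lemma row_in: "row k (A::real^'n^'m) \<in> span (rows A)"
  by (rule span_base) (auto simp: rows_def)

lemma col_in: "column k (A::real^'n^'m) \<in> span (columns A)"
  by (rule span_base) (auto simp: columns_def)

lemma elem_rank_le:
  assumes "elem_op (f::real^'n^'m \<Rightarrow> real^'n^'m)"
  shows "rank (f A) \<le> rank A"
  using assms
proof (cases rule: elem_op.cases)
  case (1 i j)
  show ?thesis
  proof (rule rank_rows_le)
    fix k
    have eq: "row k (f A) = row (if k = i then j else if k = j then i else k) A"
      by (auto simp: 1 row_swap_def row_def vec_eq_iff)
    show "row k (f A) \<in> span (rows A)" unfolding eq by (rule row_in)
  qed
next
  case (2 c i)
  show ?thesis
  proof (rule rank_rows_le)
    fix k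
    have eq: "row k (f A) = (if k = i then c else 1) *\<^sub>R row k A"
      by (auto simp: 2 row_scale_def row_def vec_eq_iff)
    show "row k (f A) \<in> span (rows A)" unfolding eq by (rule span_mul[OF row_in])
  qed
next
  case (3 i j c)
  show ?thesis
  proof (rule rank_rows_le)
    fix k
    have eq: "row k (f A) = row k A + (if k = i then c else 0) *\<^sub>R row j A"
      by (auto simp: 3 row_add_def row_def vec_eq_iff)
    show "row k (f A) \<in> span (rows A)" unfolding eq by (rule span_add[OF row_in span_mul[OF row_in]])
  qed
next
  case (4 i j)
  show ?thesis
  proof (rule rank_cols_le)
    fix k
    have eq: "column k (f A) = column (if k = i then j else if k = j then i else k) A"
      by (auto simp: 4 col_swap_def column_def vec_eq_iff)
    show "column k (f A) \<in> span (columns A)" unfolding eq by (rule col_in)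
  qed
next
  case (5 c i)
  show ?thesis
  proof (rule rank_cols_le)
    fix k
    have eq: "column k (f A) = (if k = i then c else 1) *\<^sub>R column k A"
      by (auto simp: 5 col_scale_def column_def vec_eq_iff)
    show "column k (f A) \<in> span (columns A)" unfolding eq by (rule span_mul[OF col_in])
  qed
next
  case (6 i j c)
  show ?thesis
  proof (rule rank_cols_le)
    fix k
    have eq: "column k (f A) = column k A + (if k = i then c else 0) *\<^sub>R column j A"
      by (auto simp: 6 col_add_def column_def vec_eq_iff)
    show "column k (f A) \<in> span (columns A)" unfolding eq by (rule span_add[OF col_in span_mul[OF col_in]])
  qed
qed

lemma elem_rank1:
  assumes "elem_op (f::real^'n^'m \<Rightarrow> real^'n^'m)"
  shows "rank1_connections (f ` K) \<longleftrightarrow> rank1_connections K"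
proof -
  obtain g where g: "elem_op g" "\<And>A. g (f A) = A" using elem_inv[OF assms] by blast
  have rk: "rank (f X) = rank X" for X
    using elem_rank_le[OF assms, of X] elem_rank_le[OF g(1), of "f X"] g(2)[of X] by simp
  have inj: "f A = f B \<longleftrightarrow> A = B" for A B by (metis g(2))
  show ?thesis
    unfolding rank1_connections_def
    by (auto simp: inj rk elem_diff[OF assms, symmetric])
qed

lemma elem_span:
  assumes "elem_op (f::real^'n^'m \<Rightarrow> real^'n^'m)"
  shows "fm.span (minor_polys (\<lambda>z. f (Q z))) = fm.span (minor_polys Q)"
proof
  show "fm.span (minor_polys (\<lambda>z. f (Q z))) \<subseteq> fm.span (minor_polys Q)"
    by (rule minor_span_sub[OF assms])
  obtain g where g: "elem_op g" "\<And>A. g (f A) = A" using elem_inv[OF assms] by blast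
  have "fm.span (minor_polys (\<lambda>z. g (f (Q z)))) \<subseteq> fm.span (minor_polys (\<lambda>z. f (Q z)))"
    by (rule minor_span_sub[OF g(1)])
  then show "fm.span (minor_polys Q) \<subseteq> fm.span (minor_polys (\<lambda>z. f (Q z)))"
    by (simp add: g(2))
qed

theorem lemma3:
  fixes P1 P2 :: "real^'d \<Rightarrow> real^'n^'m"
  assumes "CARD('m) \<ge> 2" and "CARD('n) \<ge> 2"
    and "CARD('d) \<le> CARD('m) * CARD('n)"
    and "linear P1" and "inj P1"
    and "linear P2" and "inj P2"
    and "mat_equiv P1 P2"
  shows "(\<not> rank1_connections (range P1) \<longleftrightarrow> \<not> rank1_connections (range P2))
       \<and> fspan (minor_polys P1) = fspan (minor_polys P2)"
  using assms(8)
proof (induction rule: mat_equiv.induct)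
  case (refl P)
  then show ?case by simp
next
  case (step P Q f)
  have r: "range (\<lambda>z. f (Q z)) = f ` range Q" by auto
  show ?case using step elem_rank1[OF step(2), of "range Q"] elem_span[OF step(2), of Q]
    by (simp add: r fspan_eq)
qed

end
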